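(* Let $d\ge3$, $\alpha\in(0,1/2)$, $z\in(0,1)$, and for $\beta>0$ set $y=y(\beta)=-\beta^{-1}\log z$. Let $r_1,\dots,r_d$ be independent with distribution $\alpha\delta_{-1}+(1-2\alpha)\delta_0+\alpha\delta_1$, let $\rho_i(\sigma)=\frac{1+\sigma r_i}{2}$ for $\sigma=\pm1$, and $X_1=\sum_{\tau\in\{\pm1\}}\prod_{h=1}^d\left(1-(1-e^{-\beta})\rho_h(\tau)\right)$. Then \[\lim_{\beta\to\infty}\log\mathbb{E}[X_1^y]=\log(\zeta\mathcal{A}^d\xi),\] where $\mathcal{A}=(1-2\alpha)I+2\alpha\sqrt z\,\mathcal{M}$, $I$ is the $(d+1)\times(d+1)$ identity, $\zeta=(1,0,\dots,0)\in\mathbb{R}^{1\times(d+1)}$, $\xi=(1,z^{-1/2},z^{-1},\dots,z^{-d/2})^T\in\mathbb{R}^{(d+1)\times1}$, and $\mathcal{M}$ is the $(d+1)\times(d+1)$ matrix indexed by $0,\dots,d$ with $\mathcal{M}_{0,1}=\mathcal{M}_{d,d-1}=1$, $\mathcal{M}_{i,i-1}=\mathcal{M}_{i,i+1}=1/2$ for $1\le i\le d-1$, and all other entries $0$.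
   Context: $\delta_x$ denotes the point mass at $x$. *)

theory Defs
  imports "HOL-Probability.Probability" "Jordan_Normal_Form.Matrix"
begin

definition r_dist :: "real \<Rightarrow> real pmf" where
  "r_dist \<alpha> = pmf_of_list [(-1, \<alpha>), (0, 1 - 2 * \<alpha>), (1, \<alpha>)]"

definition rho :: "(nat \<Rightarrow> real) \<Rightarrow> nat \<Rightarrow> real \<Rightarrow> real" where
  "rho r i \<sigma> = (1 + \<sigma> * r i) / 2"

definition X1 :: "nat \<Rightarrow> real \<Rightarrow> (nat \<Rightarrow> real) \<Rightarrow> real" where
  "X1 d \<beta> r = (\<Sum>\<tau>\<in>{-1, 1::real}. \<Prod>h=1..d. (1 - (1 - exp (-\<beta>)) * rho r h \<tau>))"

definition M_mat :: "nat \<Rightarrow> real mat" where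
  "M_mat d = Matrix.mat (d+1) (d+1) (\<lambda>(i,j).
     if i = 0 then (if j = 1 then 1 else 0)
     else if i = d then (if j = d - 1 then 1 else 0)
     else if j = i - 1 \<or> j = i + 1 then 1/2 else 0)"

definition A_mat :: "nat \<Rightarrow> real \<Rightarrow> real \<Rightarrow> real mat" where
  "A_mat d \<alpha> z = (1 - 2 * \<alpha>) \<cdot>\<^sub>m 1\<^sub>m (d+1) + (2 * \<alpha> * sqrt z) \<cdot>\<^sub>m M_mat d"

definition zeta_vec :: "nat \<Rightarrow> real Matrix.vec" where
  "zeta_vec d = Matrix.vec (d+1) (\<lambda>i. if i = 0 then 1 else 0)"

definition xi_vec :: "nat \<Rightarrow> real \<Rightarrow> real Matrix.vec" where
  "xi_vec d z = Matrix.vec (d+1) (\<lambda>i. z powr (- real i / 2))"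

end

theory Submission
  imports Defs
begin

lemma R_wf: "0 \<le> (\<alpha>::real) \<Longrightarrow> \<alpha> \<le> 1/2 \<Longrightarrow> pmf_of_list_wf [(-1, \<alpha>), (0, 1 - 2*\<alpha>), (1::real, \<alpha>)]"
  by (auto simp: pmf_of_list_wf_def)

lemma R_set: "0 \<le> \<alpha> \<Longrightarrow> \<alpha> \<le> 1/2 \<Longrightarrow> set_pmf (r_dist \<alpha>) \<subseteq> {-1,0,1}"
  unfolding r_dist_def using set_pmf_of_list[OF R_wf] by auto

lemma R_pmf:
  assumes "0 \<le> \<alpha>" "\<alpha> \<le> 1/2"
  shows "pmf (r_dist \<alpha>) (-1) = \<alpha>" "pmf (r_dist \<alpha>) 0 = 1 - 2*\<alpha>" "pmf (r_dist \<alpha>) 1 = \<alpha>"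
  unfolding r_dist_def using pmf_pmf_of_list[OF R_wf[OF assms]] by auto

abbreviation PP :: "real \<Rightarrow> nat \<Rightarrow> (nat \<Rightarrow> real) pmf" where
  "PP \<alpha> n \<equiv> Pi_pmf {1..n} 0 (\<lambda>_. r_dist \<alpha>)"

lemma PP_set: "0 \<le> \<alpha> \<Longrightarrow> \<alpha> \<le> 1/2 \<Longrightarrow> r \<in> set_pmf (PP \<alpha> n) \<Longrightarrow> h \<in> {1..n} \<Longrightarrow> r h \<in> {-1,0,1}"
  using set_Pi_pmf_subset'[of "{1..n}" 0 "\<lambda>_. r_dist \<alpha>"] R_set[of \<alpha>]
  by (auto simp: PiE_dflt_def)

lemma PP_finite: "0 \<le> \<alpha> \<Longrightarrow> \<alpha> \<le> 1/2 \<Longrightarrow> finite (set_pmf (PP \<alpha> n))"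
  apply (rule finite_subset[OF set_Pi_pmf_subset'])
   apply simp
  apply (rule finite_PiE_dflt)
  using R_set[of \<alpha>] finite_subset by auto

lemma PP_step:
  assumes "0 \<le> \<alpha>" "\<alpha> \<le> 1/2"
  shows "measure_pmf.expectation (PP \<alpha> (Suc n)) (H :: _ \<Rightarrow> real) =
     \<alpha> * measure_pmf.expectation (PP \<alpha> n) (\<lambda>f. H (f(Suc n := -1)))
   + (1 - 2*\<alpha>) * measure_pmf.expectation (PP \<alpha> n) (\<lambda>f. H (f(Suc n := 0)))
   + \<alpha> * measure_pmf.expectation (PP \<alpha> n) (\<lambda>f. H (f(Suc n := 1)))"
proof -
  define S where "S = set_pmf (PP \<alpha> n)"
  have fS: "finite S" using PP_finite[OF assms] S_def by simp
  have ins: "{1..Suc n} = insert (Suc n) {1..n}" by auto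
  have "PP \<alpha> (Suc n) = map_pmf (\<lambda>(y,f). f(Suc n:=y)) (pair_pmf (r_dist \<alpha>) (PP \<alpha> n))"
    unfolding ins by (rule Pi_pmf_insert) auto
  hence "measure_pmf.expectation (PP \<alpha> (Suc n)) H =
     measure_pmf.expectation (pair_pmf (r_dist \<alpha>) (PP \<alpha> n)) (\<lambda>x. H ((\<lambda>(y,f). f(Suc n:=y)) x))"
    by simp
  also have "\<dots> = (\<Sum>x\<in>{-1,0,1} \<times> S. H ((\<lambda>(y,f). f(Suc n:=y)) x) * pmf (pair_pmf (r_dist \<alpha>) (PP \<alpha> n)) x)"
    by (rule integral_measure_pmf_real) (use fS R_set[OF assms] S_def in auto)
  also have "\<dots> = (\<Sum>y\<in>{-1,0,1}. \<Sum>f\<in>S. H (f(Suc n:=y)) * (pmf (r_dist \<alpha>) y * pmf (PP \<alpha> n) f))"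
    by (subst sum.cartesian_product) (auto intro!: sum.cong simp: pmf_pair)
  also have "\<dots> = (\<Sum>y\<in>{-1,0,1}. pmf (r_dist \<alpha>) y * (\<Sum>f\<in>S. H (f(Suc n:=y)) * pmf (PP \<alpha> n) f))"
    by (simp add: sum_distrib_left mult_ac)
  also have "\<dots> = (\<Sum>y\<in>{-1,0,1}. pmf (r_dist \<alpha>) y * measure_pmf.expectation (PP \<alpha> n) (\<lambda>f. H (f(Suc n := y))))"
    by (intro sum.cong refl arg_cong2[where f="(*)"] integral_measure_pmf_real[symmetric]) (use fS S_def in auto)
  finally show ?thesis by (simp add: R_pmf[OF assms])
qed

definition kp :: "nat \<Rightarrow> (nat \<Rightarrow> real) \<Rightarrow> nat" where
  "kp n r = (\<Sum>h=1..n. if r h = 1 then 1 else 0)"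
definition km :: "nat \<Rightarrow> (nat \<Rightarrow> real) \<Rightarrow> nat" where
  "km n r = (\<Sum>h=1..n. if r h = -1 then 1 else 0)"

lemma kp_upd: "kp (Suc n) (f(Suc n := y)) = kp n f + (if y = 1 then 1 else 0)"
proof -
  have "(\<Sum>h=1..n. if (f(Suc n := y)) h = 1 then 1 else 0) = (\<Sum>h=1..n. if f h = 1 then (1::nat) else 0)"
    by (intro sum.cong) auto
  thus ?thesis unfolding kp_def by simp
qed

lemma km_upd: "km (Suc n) (f(Suc n := y)) = km n f + (if y = -1 then 1 else 0)"
proof -
  have "(\<Sum>h=1..n. if (f(Suc n := y)) h = -1 then 1 else 0) = (\<Sum>h=1..n. if f h = -1 then (1::nat) else 0)"
    by (intro sum.cong) auto
  thus ?thesis unfolding km_def by simp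
qed

lemma kpkm_le: "kp n r + km n r \<le> n"
proof -
  have "kp n r + km n r = (\<Sum>h=1..n. (if r h = 1 then 1 else 0) + (if r h = -1 then 1 else 0))"
    unfolding kp_def km_def by (simp add: sum.distrib)
  also have "\<dots> \<le> (\<Sum>h=1..n. (1::nat))" by (intro sum_mono) auto
  finally show ?thesis by simp
qed

lemma ind_id:
  fixes D :: int and j :: nat
  shows "(if nat \<bar>D - 1\<bar> = j then 1 else 0) + (if nat \<bar>D + 1\<bar> = j then 1 else (0::real)) =
    (if j = 1 then 2 * (if nat \<bar>D\<bar> = 0 then 1 else 0) else 0) + (if j \<ge> 2 then (if nat \<bar>D\<bar> = j - 1 then 1 else 0) else 0)
     + (if nat \<bar>D\<bar> = j + 1 then 1 else 0)"
  by (cases "D = 0"; cases "D > 0"; simp; linarith?; auto split: if_splits)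

definition ww :: "real \<Rightarrow> real \<Rightarrow> nat \<Rightarrow> nat \<Rightarrow> real" where
  "ww \<alpha> z n j = measure_pmf.expectation (PP \<alpha> n)
     (\<lambda>r. sqrt z ^ (kp n r + km n r) * (if nat \<bar>int (kp n r) - int (km n r)\<bar> = j then 1 else 0))"

lemma ww_0: "ww \<alpha> z 0 j = (if j = 0 then 1 else 0)"
  by (simp add: ww_def kp_def km_def)

lemma ww_Suc:
  assumes "0 \<le> \<alpha>" "\<alpha> \<le> 1/2"
  shows "ww \<alpha> z (Suc n) j = (1 - 2*\<alpha>) * ww \<alpha> z n j + \<alpha> * sqrt z *
     ((if j = 1 then 2 * ww \<alpha> z n 0 else 0) + (if j \<ge> 2 then ww \<alpha> z n (j-1) else 0) + ww \<alpha> z n (j+1))"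
proof -
  define E where "E = (\<lambda>g. measure_pmf.expectation (PP \<alpha> n) (g :: _ \<Rightarrow> real))"
  have int: "integrable (measure_pmf (PP \<alpha> n)) (g :: _ \<Rightarrow> real)" for g
    by (rule integrable_measure_pmf_finite[OF PP_finite[OF assms]])
  define m where "m = (\<lambda>r. kp n r + km n r)"
  define D where "D = (\<lambda>r. int (kp n r) - int (km n r))"
  define I where "I = (\<lambda>(b::bool). if b then 1 else (0::real))"
  have wwE: "ww \<alpha> z n i = E (\<lambda>r. sqrt z ^ m r * I (nat \<bar>D r\<bar> = i))" for i
    by (simp add: ww_def E_def m_def D_def I_def)
  have A: "ww \<alpha> z (Suc n) j = \<alpha> * E (\<lambda>r. sqrt z ^ (m r + 1) * I (nat \<bar>D r - 1\<bar> = j))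
     + (1 - 2*\<alpha>) * E (\<lambda>r. sqrt z ^ m r * I (nat \<bar>D r\<bar> = j))
     + \<alpha> * E (\<lambda>r. sqrt z ^ (m r + 1) * I (nat \<bar>D r + 1\<bar> = j))"
    unfolding ww_def PP_step[OF assms] kp_upd km_upd E_def m_def D_def I_def
    by (simp add: algebra_simps)
  have B: "\<alpha> * E (\<lambda>r. sqrt z ^ (m r + 1) * I (nat \<bar>D r - 1\<bar> = j))
     + \<alpha> * E (\<lambda>r. sqrt z ^ (m r + 1) * I (nat \<bar>D r + 1\<bar> = j))
     = \<alpha> * sqrt z * E (\<lambda>r. sqrt z ^ m r * (I (nat \<bar>D r - 1\<bar> = j) + I (nat \<bar>D r + 1\<bar> = j)))"
    unfolding E_def distrib_left Bochner_Integration.integral_add[OF int int] by (simp add: algebra_simps)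
  have C: "(\<lambda>r. sqrt z ^ m r * (I (nat \<bar>D r - 1\<bar> = j) + I (nat \<bar>D r + 1\<bar> = j))) =
     (\<lambda>r. (if j = 1 then 2 * (sqrt z ^ m r * I (nat \<bar>D r\<bar> = 0)) else 0)
        + (if j \<ge> 2 then sqrt z ^ m r * I (nat \<bar>D r\<bar> = j - 1) else 0)
        + sqrt z ^ m r * I (nat \<bar>D r\<bar> = j + 1))"
  proof
    fix r
    have "I (nat \<bar>D r - 1\<bar> = j) + I (nat \<bar>D r + 1\<bar> = j) =
       (if j = 1 then 2 * I (nat \<bar>D r\<bar> = 0) else 0) + (if j \<ge> 2 then I (nat \<bar>D r\<bar> = j - 1) else 0)
        + I (nat \<bar>D r\<bar> = j + 1)"
      unfolding I_def by (rule ind_id)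
    thus "sqrt z ^ m r * (I (nat \<bar>D r - 1\<bar> = j) + I (nat \<bar>D r + 1\<bar> = j)) =
     (if j = 1 then 2 * (sqrt z ^ m r * I (nat \<bar>D r\<bar> = 0)) else 0)
        + (if j \<ge> 2 then sqrt z ^ m r * I (nat \<bar>D r\<bar> = j - 1) else 0)
        + sqrt z ^ m r * I (nat \<bar>D r\<bar> = j + 1)"
      by (simp add: algebra_simps)
  qed
  have D: "E (\<lambda>r. (if j = 1 then 2 * (sqrt z ^ m r * I (nat \<bar>D r\<bar> = 0)) else 0)
        + (if j \<ge> 2 then sqrt z ^ m r * I (nat \<bar>D r\<bar> = j - 1) else 0)
        + sqrt z ^ m r * I (nat \<bar>D r\<bar> = j + 1)) = (if j = 1 then 2 * ww \<alpha> z n 0 else 0) + (if j \<ge> 2 then ww \<alpha> z n (j-1) else 0) + ww \<alpha> z n (j+1)"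
    unfolding wwE E_def Bochner_Integration.integral_add[OF int int] integral_mult_right_zero by (cases "j = 1"; cases "j \<ge> 2"; simp)
  have "ww \<alpha> z (Suc n) j = (1 - 2*\<alpha>) * E (\<lambda>r. sqrt z ^ m r * I (nat \<bar>D r\<bar> = j))
     + (\<alpha> * E (\<lambda>r. sqrt z ^ (m r + 1) * I (nat \<bar>D r - 1\<bar> = j))
     + \<alpha> * E (\<lambda>r. sqrt z ^ (m r + 1) * I (nat \<bar>D r + 1\<bar> = j)))" using A by simp
  also note B
  also note C
  also note D
  finally show ?thesis unfolding wwE[of j, symmetric] by (simp add: algebra_simps)
qed

lemma ww_zero: "0 \<le> \<alpha> \<Longrightarrow> \<alpha> \<le> 1/2 \<Longrightarrow> j > n \<Longrightarrow> ww \<alpha> z n j = 0"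
proof (induction n arbitrary: j)
  case 0 thus ?case by (simp add: ww_0)
next
  case (Suc n) thus ?case by (simp add: ww_Suc)
qed

definition Mf :: "nat \<Rightarrow> nat \<Rightarrow> nat \<Rightarrow> real" where
  "Mf d k j = (if k = 0 then (if j = 1 then 1 else 0)
     else if k = d then (if j = d - 1 then 1 else 0)
     else if j = k - 1 \<or> j = k + 1 then 1/2 else 0)"

lemma A_carrier: "A_mat d \<alpha> z \<in> carrier_mat (d+1) (d+1)"
  by (simp add: A_mat_def M_mat_def)

lemma A_index: "k < d+1 \<Longrightarrow> j < d+1 \<Longrightarrow>
   A_mat d \<alpha> z $$ (k,j) = (1 - 2*\<alpha>) * (if k = j then 1 else 0) + 2*\<alpha> * sqrt z * Mf d k j"
  by (simp add: A_mat_def M_mat_def Mf_def)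

lemma Msum:
  fixes g :: "nat \<Rightarrow> real"
  assumes "d \<ge> 3" "j \<le> d" "g d = 0"
  shows "(\<Sum>k\<in>{0..<d+1}. g k * Mf d k j) =
     (if j \<noteq> 0 then g (j-1) * (if j = 1 then 1 else 1/2) else 0) + (if j+1 \<le> d then g (j+1) / 2 else 0)"
proof (cases "j = 0")
  case True
  have "(\<Sum>k\<in>{0..<d+1}. g k * Mf d k j) = (\<Sum>k\<in>{0..<d+1}. if k = j+1 then g k / 2 else 0)"
    by (intro sum.cong refl) (use assms True in \<open>auto simp: Mf_def\<close>)
  also have "\<dots> = (if j+1 \<le> d then g (j+1) / 2 else 0)"
    by (subst sum.delta) auto
  finally show ?thesis using True by simp
next
  case False
  have "(\<Sum>k\<in>{0..<d+1}. g k * Mf d k j) = (\<Sum>k\<in>{0..<d+1}. (if k = j+1 then g k / 2 else 0)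
        + (if k = j - 1 then g k * (if k = 0 then 1 else 1/2) else 0))"
    by (intro sum.cong refl) (use assms False in \<open>auto simp: Mf_def\<close>)
  also have "\<dots> = (if j+1 \<le> d then g (j+1) / 2 else 0) + g (j-1) * (if j = 1 then 1 else 1/2)"
    unfolding sum.distrib
    using sum.delta[of "{0..<d+1}" "j+1" "\<lambda>k. g k / 2"]
      sum.delta[of "{0..<d+1}" "j-1" "\<lambda>k. g k * (if k = 0 then 1 else 1/2)"] assms False by auto
  finally show ?thesis using False by simp
qed

lemma v_eq_ww:
  assumes "d \<ge> 3" "0 \<le> \<alpha>" "\<alpha> \<le> 1/2"
  shows "n \<le> d \<Longrightarrow> j \<le> d \<Longrightarrow> (A_mat d \<alpha> z ^\<^sub>m n) $$ (0,j) = ww \<alpha> z n j"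
proof (induction n arbitrary: j)
  case 0
  thus ?case using A_carrier[of d \<alpha> z] by (simp add: ww_0)
next
  case (Suc n)
  define g where "g = (\<lambda>k. (A_mat d \<alpha> z ^\<^sub>m n) $$ (0,k))"
  have gw: "k \<le> d \<Longrightarrow> g k = ww \<alpha> z n k" for k using Suc g_def by simp
  have gd: "g d = 0" using gw[of d] ww_zero[OF assms(2,3), of n d] Suc by simp
  have "(A_mat d \<alpha> z ^\<^sub>m Suc n) $$ (0,j) = (\<Sum>k\<in>{0..<d+1}. g k * A_mat d \<alpha> z $$ (k,j))"
    using A_carrier[of d \<alpha> z] Suc.prems by (simp add: g_def scalar_prod_def)
  also have "\<dots> = (\<Sum>k\<in>{0..<d+1}. (1 - 2*\<alpha>) * (if k = j then g k else 0) + 2*\<alpha> * sqrt z * (g k * Mf d k j))"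
    by (intro sum.cong refl) (use Suc.prems in \<open>auto simp: A_index algebra_simps\<close>)
  also have "\<dots> = (1 - 2*\<alpha>) * g j + 2*\<alpha> * sqrt z * (\<Sum>k\<in>{0..<d+1}. g k * Mf d k j)"
    using Suc.prems by (simp add: sum.distrib sum_distrib_left[symmetric])
  also have "\<dots> = (1 - 2*\<alpha>) * g j + 2*\<alpha> * sqrt z * ((if j \<noteq> 0 then g (j-1) * (if j = 1 then 1 else 1/2) else 0) + (if j+1 \<le> d then g (j+1) / 2 else 0))"
    using Msum[of d j g, OF assms(1) Suc.prems(2) gd] by simp
  also have "\<dots> = ww \<alpha> z (Suc n) j"
    using Suc.prems gw ww_zero[OF assms(2,3), of n "j+1"] assms(1)
    by (auto simp: ww_Suc[OF assms(2,3)] algebra_simps)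
  finally show ?case .
qed

lemma A_dims: "dim_row (A_mat d \<alpha> z) = d+1" "dim_col (A_mat d \<alpha> z) = d+1"
  by (simp_all add: A_mat_def M_mat_def)

lemma pw_min:
  fixes z :: real assumes "0 < z"
  shows "sqrt z ^ (a+b) * z powr (- real (nat \<bar>int a - int b\<bar>) / 2) = z ^ min a b"
proof -
  have "sqrt z ^ (a+b) = z powr (real (a+b) * (1/2))"
    using assms by (simp add: powr_half_sqrt[symmetric] powr_power)
  hence "sqrt z ^ (a+b) * z powr (- real (nat \<bar>int a - int b\<bar>) / 2)
     = z powr (real (a+b) * (1/2)) * z powr (- real (nat \<bar>int a - int b\<bar>) / 2)" by simp
  also have "\<dots> = z powr (real (a+b) * (1/2) + (- real (nat \<bar>int a - int b\<bar>) / 2))"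
    by (rule powr_add[symmetric])
  also have "real (a+b) * (1/2) + (- real (nat \<bar>int a - int b\<bar>) / 2) = real (min a b)"
    by (cases "a \<le> b") (simp_all add: field_simps)
  finally show ?thesis using assms by (simp add: powr_realpow)
qed

lemma final_matrix:
  assumes "d \<ge> 3" "0 \<le> \<alpha>" "\<alpha> \<le> 1/2" "0 < z"
  shows "scalar_prod (zeta_vec d) ((A_mat d \<alpha> z ^\<^sub>m d) *\<^sub>v xi_vec d z)
       = measure_pmf.expectation (PP \<alpha> d) (\<lambda>r. z ^ min (kp d r) (km d r))"
proof -
  have int: "integrable (measure_pmf (PP \<alpha> d)) (g :: _ \<Rightarrow> real)" for g
    by (rule integrable_measure_pmf_finite[OF PP_finite[OF assms(2,3)]])
  have int': "integrable (measure_pmf (Pi_pmf {Suc 0..d} 0 (\<lambda>_. r_dist \<alpha>))) (g :: _ \<Rightarrow> real)" for g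
    using int[of g] by simp
  have Ac: "A_mat d \<alpha> z ^\<^sub>m d \<in> carrier_mat (d+1) (d+1)" using A_carrier by (rule pow_carrier_mat)
  define w where "w = (A_mat d \<alpha> z ^\<^sub>m d) *\<^sub>v xi_vec d z"
  have dimw: "dim_vec w = d+1" using A_carrier[of d \<alpha> z] by (simp add: w_def)
  have "scalar_prod (zeta_vec d) ((A_mat d \<alpha> z ^\<^sub>m d) *\<^sub>v xi_vec d z)
      = (\<Sum>i\<in>{0..<d+1}. zeta_vec d $ i * w $ i)"
    unfolding w_def[symmetric] scalar_prod_def dimw ..
  also have "\<dots> = (\<Sum>i\<in>{0..<d+1}. if i = 0 then w $ i else 0)"
    by (intro sum.cong refl) (simp add: zeta_vec_def)
  also have "\<dots> = w $ 0" by (simp add: sum.delta)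
  also have "\<dots> = Matrix.row (A_mat d \<alpha> z ^\<^sub>m d) 0 \<bullet> xi_vec d z"
    unfolding w_def by (rule index_mult_mat_vec) (use A_carrier[of d \<alpha> z] in simp)
  also have "\<dots> = (\<Sum>j\<in>{0..<d+1}. Matrix.row (A_mat d \<alpha> z ^\<^sub>m d) 0 $ j * xi_vec d z $ j)"
    unfolding scalar_prod_def by (simp add: xi_vec_def)
  also have "\<dots> = (\<Sum>j\<in>{0..<d+1}. (A_mat d \<alpha> z ^\<^sub>m d) $$ (0,j) * z powr (- real j / 2))"
    by (intro sum.cong refl) (simp add: xi_vec_def A_dims)
  also have "\<dots> = (\<Sum>j\<in>{0..<d+1}. ww \<alpha> z d j * z powr (- real j / 2))"
    by (intro sum.cong refl) (simp add: v_eq_ww[OF assms(1-3)])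
  also have "\<dots> = measure_pmf.expectation (PP \<alpha> d) (\<lambda>r. \<Sum>j\<in>{0..<d+1}.
        sqrt z ^ (kp d r + km d r) * (if nat \<bar>int (kp d r) - int (km d r)\<bar> = j then 1 else 0) * z powr (- real j / 2))"
    by (subst Bochner_Integration.integral_sum) (auto simp: int int' ww_def)
  also have "\<dots> = measure_pmf.expectation (PP \<alpha> d) (\<lambda>r. z ^ min (kp d r) (km d r))"
  proof (intro Bochner_Integration.integral_cong refl)
    fix r
    define N where "N = nat \<bar>int (kp d r) - int (km d r)\<bar>"
    have N: "N \<in> {0..<d+1}" using kpkm_le[of d r] unfolding N_def by auto
    have "(\<Sum>j\<in>{0..<d+1}. sqrt z ^ (kp d r + km d r) * (if N = j then 1 else 0) * z powr (- real j / 2))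
       = (\<Sum>j\<in>{0..<d+1}. if j = N then sqrt z ^ (kp d r + km d r) * z powr (- real j / 2) else 0)"
      by (intro sum.cong refl) auto
    also have "\<dots> = sqrt z ^ (kp d r + km d r) * z powr (- real N / 2)"
      using N by (simp add: sum.delta)
    also have "\<dots> = z ^ min (kp d r) (km d r)" unfolding N_def by (rule pw_min[OF assms(4)])
    finally show "(\<Sum>j\<in>{0..<d+1}. sqrt z ^ (kp d r + km d r) * (if nat \<bar>int (kp d r) - int (km d r)\<bar> = j then 1 else 0) * z powr (- real j / 2))
       = z ^ min (kp d r) (km d r)" unfolding N_def .
  qed
  finally show ?thesis .
qed

lemma lim_aux:
  fixes z :: real
  assumes "0 < z" "(g \<longlongrightarrow> G) at_top" "G > 0" "\<And>\<beta>. \<beta> > 0 \<Longrightarrow> g \<beta> > 0"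
  shows "((\<lambda>\<beta>. (exp (-\<beta>) ^ k * g \<beta>) powr (- ln z / \<beta>)) \<longlongrightarrow> z ^ k) at_top"
proof -
  have ev: "\<forall>\<^sub>F \<beta> in at_top. exp (real k * ln z - ln z * (ln (g \<beta>) * (1 / \<beta>))) = (exp (-\<beta>) ^ k * g \<beta>) powr (- ln z / \<beta>)"
    using eventually_gt_at_top[of "0::real"]
  proof eventually_elim
    case (elim \<beta>)
    have gp: "g \<beta> > 0" using assms(4) elim by simp
    have "ln (exp (-\<beta>) ^ k * g \<beta>) = real k * (-\<beta>) + ln (g \<beta>)"
      using gp by (simp add: ln_mult exp_of_nat_mult[symmetric])
    hence "(exp (-\<beta>) ^ k * g \<beta>) powr (- ln z / \<beta>) = exp ((- ln z / \<beta>) * (real k * (-\<beta>) + ln (g \<beta>)))"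
      using gp by (simp add: powr_def mult.commute)
    also have "(- ln z / \<beta>) * (real k * (-\<beta>) + ln (g \<beta>)) = real k * ln z - ln z * (ln (g \<beta>) * (1 / \<beta>))"
      using elim by (simp add: field_simps)
    finally show ?case by simp
  qed
  have inv: "((\<lambda>\<beta>::real. 1 / \<beta>) \<longlongrightarrow> 0) at_top"
    by (rule tendsto_divide_0[OF tendsto_const filterlim_at_top_imp_at_infinity[OF filterlim_ident]])
  have "((\<lambda>\<beta>. exp (real k * ln z - ln z * (ln (g \<beta>) * (1 / \<beta>)))) \<longlongrightarrow> exp (real k * ln z - ln z * (ln G * 0))) at_top"
    by (intro tendsto_intros assms(2) inv) (use assms(3) in simp)
  also have "exp (real k * ln z - ln z * (ln G * 0)) = z ^ k"
    using assms(1) by (simp add: exp_of_nat_mult)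
  finally show ?thesis using ev by (rule Lim_transform_eventually)
qed

definition n0 :: "nat \<Rightarrow> (nat \<Rightarrow> real) \<Rightarrow> nat" where
  "n0 n r = (\<Sum>h=1..n. if r h = 0 then 1 else 0)"

lemma X1_form:
  assumes "\<And>h. h \<in> {1..d} \<Longrightarrow> r h \<in> {-1,0,1}"
  shows "X1 d \<beta> r = ((1 + exp (-\<beta>)) / 2) ^ n0 d r * exp (-\<beta>) ^ kp d r
                   + ((1 + exp (-\<beta>)) / 2) ^ n0 d r * exp (-\<beta>) ^ km d r"
proof -
  define e where "e = exp (-\<beta>)"
  define c where "c = (1 + exp (-\<beta>)) / 2"
  have P1: "(\<Prod>h=1..d. 1 - (1 - exp (-\<beta>)) * rho r h 1) = (\<Prod>h=1..d. c ^ (if r h = 0 then 1 else 0) * e ^ (if r h = 1 then 1 else 0))"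
  proof (intro prod.cong refl)
    fix h assume "h \<in> {1..d}"
    hence "r h = -1 \<or> r h = 0 \<or> r h = 1" using assms by auto
    thus "1 - (1 - exp (-\<beta>)) * rho r h 1 = c ^ (if r h = 0 then 1 else 0) * e ^ (if r h = 1 then 1 else 0)"
      by (auto simp: rho_def c_def e_def field_simps)
  qed
  have P2: "(\<Prod>h=1..d. 1 - (1 - exp (-\<beta>)) * rho r h (-1)) = (\<Prod>h=1..d. c ^ (if r h = 0 then 1 else 0) * e ^ (if r h = -1 then 1 else 0))"
  proof (intro prod.cong refl)
    fix h assume "h \<in> {1..d}"
    hence "r h = -1 \<or> r h = 0 \<or> r h = 1" using assms by auto
    thus "1 - (1 - exp (-\<beta>)) * rho r h (-1) = c ^ (if r h = 0 then 1 else 0) * e ^ (if r h = -1 then 1 else 0)"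
      by (auto simp: rho_def c_def e_def field_simps)
  qed
  have "X1 d \<beta> r = (\<Prod>h=1..d. 1 - (1 - exp (-\<beta>)) * rho r h (-1)) + (\<Prod>h=1..d. 1 - (1 - exp (-\<beta>)) * rho r h 1)"
    by (simp add: X1_def)
  also have "\<dots> = c ^ n0 d r * e ^ km d r + c ^ n0 d r * e ^ kp d r"
    unfolding P1 P2 prod.distrib n0_def kp_def km_def power_sum ..
  finally show ?thesis unfolding c_def e_def by simp
qed

lemma pointwise_lim:
  fixes z :: real
  assumes "0 < z" "\<And>h. h \<in> {1..d} \<Longrightarrow> r h \<in> {-1,0,1}"
  shows "((\<lambda>\<beta>. X1 d \<beta> r powr (- ln z / \<beta>)) \<longlongrightarrow> z ^ min (kp d r) (km d r)) at_top"
proof -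
  define k where "k = min (kp d r) (km d r)"
  define g where "g = (\<lambda>\<beta>::real. ((1 + exp (-\<beta>)) / 2) ^ n0 d r * (exp (-\<beta>) ^ (kp d r - k) + exp (-\<beta>) ^ (km d r - k)))"
  have X: "X1 d \<beta> r = exp (-\<beta>) ^ k * g \<beta>" for \<beta>
  proof -
    have "exp (-\<beta>) ^ kp d r = exp (-\<beta>) ^ k * exp (-\<beta>) ^ (kp d r - k)"
      "exp (-\<beta>) ^ km d r = exp (-\<beta>) ^ k * exp (-\<beta>) ^ (km d r - k)"
      unfolding power_add[symmetric] by (simp_all add: k_def)
    thus ?thesis using X1_form[of d r \<beta>] assms(2) unfolding g_def by (simp add: algebra_simps)
  qed
  have e0: "((\<lambda>\<beta>::real. exp (-\<beta>)) \<longlongrightarrow> 0) at_top"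
    by (rule filterlim_compose[OF exp_at_bot filterlim_uminus_at_bot_at_top])
  have gl: "(g \<longlongrightarrow> ((1 + 0) / 2) ^ n0 d r * (0 ^ (kp d r - k) + 0 ^ (km d r - k))) at_top"
    unfolding g_def by (intro tendsto_intros e0) auto
  have Gpos: "((1 + 0) / 2) ^ n0 d r * (0 ^ (kp d r - k) + (0::real) ^ (km d r - k)) > 0"
  proof -
    have "(0::real) ^ (kp d r - k) + 0 ^ (km d r - k) \<ge> 1"
      by (cases "kp d r \<le> km d r") (simp_all add: k_def power_0_left)
    thus ?thesis by (intro mult_pos_pos) auto
  qed
  have gpos: "g \<beta> > 0" for \<beta> unfolding g_def
  proof (intro mult_pos_pos add_pos_pos)
    have "(1 + exp (-\<beta>)) / 2 > 0" by (simp add: add_pos_pos)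
    thus "((1 + exp (-\<beta>)) / 2) ^ n0 d r > 0" by (rule zero_less_power)
  qed auto
  show ?thesis unfolding X k_def[symmetric]
    by (rule lim_aux[OF assms(1) gl Gpos gpos])
qed

theorem lemma6p2:
  fixes d :: nat and \<alpha> z :: real
  assumes "d \<ge> 3" and "0 < \<alpha>" and "\<alpha> < 1/2" and "0 < z" and "z < 1"
  shows "((\<lambda>\<beta>. ln (measure_pmf.expectation (Pi_pmf {1..d} 0 (\<lambda>_. r_dist \<alpha>))
                  (\<lambda>r. X1 d \<beta> r powr (- ln z / \<beta>))))
          \<longlongrightarrow> ln (scalar_prod (zeta_vec d) ((A_mat d \<alpha> z ^\<^sub>m d) *\<^sub>v xi_vec d z))) at_top"
proof -
  have a0: "0 \<le> \<alpha>" and a1: "\<alpha> \<le> 1/2" using assms by auto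
  define S where "S = set_pmf (PP \<alpha> d)"
  have fS: "finite S" unfolding S_def by (rule PP_finite[OF a0 a1])
  have E: "measure_pmf.expectation (PP \<alpha> d) f = (\<Sum>r\<in>S. f r * pmf (PP \<alpha> d) r)" for f :: "_ \<Rightarrow> real"
    by (rule integral_measure_pmf_real) (use fS S_def in auto)
  have "((\<lambda>\<beta>. \<Sum>r\<in>S. X1 d \<beta> r powr (- ln z / \<beta>) * pmf (PP \<alpha> d) r) \<longlongrightarrow>
        (\<Sum>r\<in>S. z ^ min (kp d r) (km d r) * pmf (PP \<alpha> d) r)) at_top"
    by (intro tendsto_sum tendsto_mult_right pointwise_lim assms(4) PP_set[OF a0 a1]) (auto simp: S_def)
  hence lim: "((\<lambda>\<beta>. measure_pmf.expectation (PP \<alpha> d) (\<lambda>r. X1 d \<beta> r powr (- ln z / \<beta>))) \<longlongrightarrow>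
        measure_pmf.expectation (PP \<alpha> d) (\<lambda>r. z ^ min (kp d r) (km d r))) at_top"
    unfolding E .
  have "(\<Sum>r\<in>S. z ^ d * pmf (PP \<alpha> d) r) \<le> (\<Sum>r\<in>S. z ^ min (kp d r) (km d r) * pmf (PP \<alpha> d) r)"
  proof (intro sum_mono mult_right_mono)
    fix r
    have "min (kp d r) (km d r) \<le> d" using kpkm_le[of d r] by simp
    thus "z ^ d \<le> z ^ min (kp d r) (km d r)" using assms(4,5) by (intro power_decreasing) auto
  qed auto
  moreover have "(\<Sum>r\<in>S. z ^ d * pmf (PP \<alpha> d) r) = z ^ d"
    using sum_pmf_eq_1[OF fS, of "PP \<alpha> d"] by (simp add: S_def sum_distrib_left[symmetric])
  ultimately have "measure_pmf.expectation (PP \<alpha> d) (\<lambda>r. z ^ min (kp d r) (km d r)) \<ge> z ^ d"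
    unfolding E by simp
  moreover have "z ^ d > 0" using assms(4) by simp
  ultimately have ne: "measure_pmf.expectation (PP \<alpha> d) (\<lambda>r. z ^ min (kp d r) (km d r)) \<noteq> 0" by linarith
  show ?thesis
    unfolding final_matrix[OF assms(1) a0 a1 assms(4)]
    by (rule tendsto_ln[OF lim ne])
qed

end
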